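(* Consider the truncated variable-rate cooperative incremental-redundancy HARQ protocol described in the context, with maximum number of rounds $K\ge 1$, source redundancies $\rho^{S}_1,\dots,\rho^{S}_K\ge 0$ and relay redundancies $\rho^{R}_{l,k}\ge 0$ for $1\le l<k\le K$. Then the outage probability is $$P_{\mathrm{out}} = p^{SD}_K\, p^{SR}_{K-1} + \sum_{i=1}^{K-1}\big[p^{SR}_{i-1}-p^{SR}_{i}\big]\, p^{SRD}_{i,K},$$ the expected total number of channel uses is $\overline{N}_s = N_b\cdot D$, where $$D=\sum_{i=1}^K \rho^{S}_i\, p^{SD}_{i-1}\, p^{SR}_{i-1} + \sum_{i=1}^{K-1}\big[p^{SR}_{i-1}-p^{SR}_{i}\big]\Big[\sum_{l=i+2}^{K}\rho^{R}_{i,l}\, p^{SRD}_{i,l-1} + \rho^{R}_{i,i+1}\, p^{SD}_{i}\Big],$$ and consequently the throughput is $\eta = \dfrac{N_b(1-P_{\mathrm{out}})}{\overline{N}_s} = \dfrac{1-P_{\mathrm{out}}}{D}$.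
   Context: Three half-duplex nodes: source $S$, relay $R$, destination $D$. A message of $N_b$ bits is to be delivered from $S$ to $D$, in at most $K$ transmission rounds. For links $ab\in\{SR,SD,RD\}$ and rounds $k=1,\dots,K$, the SNRs $\gamma^{ab}_k$ are mutually independent random variables, i.i.d. across rounds for each link, with continuous distributions, and $C^{ab}_k=\log_2(1+\gamma^{ab}_k)$. In round $k$ a transmitter uses $N_b\rho_k$ channel uses (fresh, disjoint parts of one Gaussian codeword), where $\rho_k$ is the redundancy of that round. The normalized mutual information gained in round $k$ is $\iota^{SD}_k=C^{SD}_k\rho^{S}_k$ and $\iota^{SR}_k=C^{SR}_k\rho^{S}_k$ when $S$ transmits, and $\iota^{RD}_{l,k}=C^{RD}_k\rho^{R}_{l,k}$ when $R$ transmits in round $k$ after having decoded in round $l$. A node decodes at the end of a round as soon as its accumulated normalized mutual information is at least $1$; decoding outcomes are fed back error-free (one bit ACK/NACK). Protocol: in the broadcasting phase $S$ transmits in rounds $1,2,\dots$ (both $R$ and $D$ accumulate $\iota^{SR}$ and $\iota^{SD}$) until $D$ or $R$ decodes. If $D$ decodes, transmission ends successfully. If $R$ decodes at the end of round $l<K$ while $D$ has not, the relaying phase starts: $S$ is silent and $R$ transmits in rounds $k=l+1,\dots,K$ with redundancies $\rho^{R}_{l,k}$, $D$ accumulating $\iota^{RD}_{l,k}$ on top of $\sum_{m=1}^l\iota^{SD}_m$, until $D$ decodes. The process stops when $D$ decodes or after round $K$; outage is the event that $D$ has not decoded after round $K$, with probability $P_{\mathrm{out}}$, and $\overline{N}_s$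 is the expected total number of channel uses spent on the message. Define $p^{SD}_k=\Pr\{\sum_{i=1}^k\iota^{SD}_i<1\}$, $p^{SR}_k=\Pr\{\sum_{i=1}^k\iota^{SR}_i<1\}$, with $p^{SD}_0=p^{SR}_0=1$, and for $1\le l<k\le K$, $p^{SRD}_{l,k}=\Pr\{\sum_{i=1}^l\iota^{SD}_i+\sum_{i=l+1}^k\iota^{RD}_{l,i}<1\}$ (with $p^{SRD}_{l,l}=p^{SD}_l$). The throughput is defined (renewal-reward) as $\eta=N_b(1-P_{\mathrm{out}})/\overline{N}_s$. *)

theory Defs
  imports "HOL-Probability.Probability"
begin

datatype link = SR | SD | RD

definition cap :: "real \<Rightarrow> real" where
  "cap g = log 2 (1 + g)"

text \<open>Deterministic description of the protocol, given the per-round capacities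
  c a k (link a, round k), source redundancies rS k and relay redundancies rR l k.\<close>

definition accS :: "(nat \<Rightarrow> real) \<Rightarrow> (nat \<Rightarrow> real) \<Rightarrow> nat \<Rightarrow> real" where
  "accS rS cl k = (\<Sum>i=1..k. cl i * rS i)"

text \<open>Accumulated information at D after round k when R decoded in round l.\<close>
definition accRD :: "(nat \<Rightarrow> real) \<Rightarrow> (nat \<Rightarrow> nat \<Rightarrow> real) \<Rightarrow> (link \<Rightarrow> nat \<Rightarrow> real)
    \<Rightarrow> nat \<Rightarrow> nat \<Rightarrow> real" where
  "accRD rS rR c l k = accS rS (c SD) l + (\<Sum>i=l+1..k. c RD i * rR l i)"

text \<open>S transmits in round k: neither R nor D decoded in rounds before k.\<close>
definition S_tx :: "nat \<Rightarrow> (nat \<Rightarrow> real) \<Rightarrow> (link \<Rightarrow> nat \<Rightarrow> real) \<Rightarrow> nat \<Rightarrow> bool" where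
  "S_tx K rS c k \<longleftrightarrow> 1 \<le> k \<and> k \<le> K \<and>
     (\<forall>m\<in>{1..<k}. accS rS (c SR) m < 1 \<and> accS rS (c SD) m < 1)"

text \<open>The relaying phase starts after round l < K: S transmitted in round l, R decodes
  at the end of round l, D does not.\<close>
definition relay_start :: "nat \<Rightarrow> (nat \<Rightarrow> real) \<Rightarrow> (link \<Rightarrow> nat \<Rightarrow> real) \<Rightarrow> nat \<Rightarrow> bool" where
  "relay_start K rS c l \<longleftrightarrow> l < K \<and> S_tx K rS c l \<and>
     1 \<le> accS rS (c SR) l \<and> accS rS (c SD) l < 1"

text \<open>R transmits in round k after having decoded in round l.\<close>
definition R_tx :: "nat \<Rightarrow> (nat \<Rightarrow> real) \<Rightarrow> (nat \<Rightarrow> nat \<Rightarrow> real) \<Rightarrow> (link \<Rightarrow> nat \<Rightarrow> real)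
    \<Rightarrow> nat \<Rightarrow> nat \<Rightarrow> bool" where
  "R_tx K rS rR c l k \<longleftrightarrow> relay_start K rS c l \<and> l < k \<and> k \<le> K \<and>
     (\<forall>m\<in>{l<..<k}. accRD rS rR c l m < 1)"

text \<open>D decodes at the end of some round in which a transmission took place.\<close>
definition success :: "nat \<Rightarrow> (nat \<Rightarrow> real) \<Rightarrow> (nat \<Rightarrow> nat \<Rightarrow> real) \<Rightarrow> (link \<Rightarrow> nat \<Rightarrow> real) \<Rightarrow> bool" where
  "success K rS rR c \<longleftrightarrow>
     (\<exists>k. S_tx K rS c k \<and> 1 \<le> accS rS (c SD) k) \<or>
     (\<exists>l k. R_tx K rS rR c l k \<and> 1 \<le> accRD rS rR c l k)"

definition chan_uses :: "nat \<Rightarrow> nat \<Rightarrow> (nat \<Rightarrow> real) \<Rightarrow> (nat \<Rightarrow> nat \<Rightarrow> real) \<Rightarrow> (link \<Rightarrow> nat \<Rightarrow> real) \<Rightarrow> real" where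
  "chan_uses Nb K rS rR c = real Nb *
     ((\<Sum>k=1..K. if S_tx K rS c k then rS k else 0) +
      (\<Sum>l=1..K. \<Sum>k=1..K. if R_tx K rS rR c l k then rR l k else 0))"

definition caps :: "(link \<Rightarrow> nat \<Rightarrow> 'a \<Rightarrow> real) \<Rightarrow> 'a \<Rightarrow> link \<Rightarrow> nat \<Rightarrow> real" where
  "caps g w = (\<lambda>a k. cap (g a k w))"

definition P_out :: "'a measure \<Rightarrow> (link \<Rightarrow> nat \<Rightarrow> 'a \<Rightarrow> real) \<Rightarrow> nat \<Rightarrow> (nat \<Rightarrow> real)
    \<Rightarrow> (nat \<Rightarrow> nat \<Rightarrow> real) \<Rightarrow> real" where
  "P_out M g K rS rR = measure M {w\<in>space M. \<not> success K rS rR (caps g w)}"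

definition N_s_bar :: "'a measure \<Rightarrow> (link \<Rightarrow> nat \<Rightarrow> 'a \<Rightarrow> real) \<Rightarrow> nat \<Rightarrow> nat \<Rightarrow> (nat \<Rightarrow> real)
    \<Rightarrow> (nat \<Rightarrow> nat \<Rightarrow> real) \<Rightarrow> real" where
  "N_s_bar M g Nb K rS rR = (\<integral>w. chan_uses Nb K rS rR (caps g w) \<partial>M)"

definition throughput :: "'a measure \<Rightarrow> (link \<Rightarrow> nat \<Rightarrow> 'a \<Rightarrow> real) \<Rightarrow> nat \<Rightarrow> nat \<Rightarrow> (nat \<Rightarrow> real)
    \<Rightarrow> (nat \<Rightarrow> nat \<Rightarrow> real) \<Rightarrow> real" where
  "throughput M g Nb K rS rR = real Nb * (1 - P_out M g K rS rR) / N_s_bar M g Nb K rS rR"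

definition pSD :: "'a measure \<Rightarrow> (link \<Rightarrow> nat \<Rightarrow> 'a \<Rightarrow> real) \<Rightarrow> (nat \<Rightarrow> real) \<Rightarrow> nat \<Rightarrow> real" where
  "pSD M g rS k = measure M {w\<in>space M. accS rS (caps g w SD) k < 1}"

definition pSR :: "'a measure \<Rightarrow> (link \<Rightarrow> nat \<Rightarrow> 'a \<Rightarrow> real) \<Rightarrow> (nat \<Rightarrow> real) \<Rightarrow> nat \<Rightarrow> real" where
  "pSR M g rS k = measure M {w\<in>space M. accS rS (caps g w SR) k < 1}"

definition pSRD :: "'a measure \<Rightarrow> (link \<Rightarrow> nat \<Rightarrow> 'a \<Rightarrow> real) \<Rightarrow> (nat \<Rightarrow> real)
    \<Rightarrow> (nat \<Rightarrow> nat \<Rightarrow> real) \<Rightarrow> nat \<Rightarrow> nat \<Rightarrow> real" where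
  "pSRD M g rS rR l k = measure M {w\<in>space M. accRD rS rR (caps g w) l k < 1}"

end

theory Submission
  imports Defs
begin


lemma least_ex: "P (n::nat) \<Longrightarrow> \<exists>k\<le>n. P k \<and> (\<forall>j<k. \<not> P j)"
  by (metis LeastI Least_le not_less_Least)

lemma accS_0[simp]: "accS rS cl 0 = 0" by (simp add: accS_def)

lemma accS_mono:
  assumes "\<forall>k\<in>{1..K}. 0 \<le> cl k" "\<forall>k\<in>{1..K}. 0 \<le> rS k" "m \<le> n" "n \<le> K"
  shows "accS rS cl m \<le> accS rS cl n"
  unfolding accS_def
  by (rule sum_mono2) (use assms in auto)

lemma accRD_ll[simp]: "accRD rS rR c l l = accS rS (c SD) l"
  by (simp add: accRD_def)

lemma accRD_mono:
  assumes "\<forall>k\<in>{1..K}. 0 \<le> c RD k" "\<forall>l k. 1 \<le> l \<and> l < k \<and> k \<le> K \<longrightarrow> 0 \<le> rR l k"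
    "1 \<le> l" "l \<le> m" "m \<le> n" "n \<le> K"
  shows "accRD rS rR c l m \<le> accRD rS rR c l n"
  unfolding accRD_def
  by (simp, rule sum_mono2) (use assms in auto)

context
  fixes K :: nat and rS :: "nat \<Rightarrow> real" and rR :: "nat \<Rightarrow> nat \<Rightarrow> real" and c :: "link \<Rightarrow> nat \<Rightarrow> real"
  assumes cnn: "\<forall>a. \<forall>k\<in>{1..K}. 0 \<le> c a k"
    and rSnn: "\<forall>k\<in>{1..K}. 0 \<le> rS k"
    and rRnn: "\<forall>l k. 1 \<le> l \<and> l < k \<and> k \<le> K \<longrightarrow> 0 \<le> rR l k"
begin

private abbreviation "a \<equiv> accS rS (c SR)"
private abbreviation "b \<equiv> accS rS (c SD)"
private abbreviation "r \<equiv> accRD rS rR c"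

lemma amono: "m \<le> n \<Longrightarrow> n \<le> K \<Longrightarrow> a m \<le> a n"
  by (rule accS_mono[of K]) (use cnn rSnn in auto)
lemma bmono: "m \<le> n \<Longrightarrow> n \<le> K \<Longrightarrow> b m \<le> b n"
  by (rule accS_mono[of K]) (use cnn rSnn in auto)
lemma rmono: "1 \<le> l \<Longrightarrow> l \<le> m \<Longrightarrow> m \<le> n \<Longrightarrow> n \<le> K \<Longrightarrow> r l m \<le> r l n"
  by (rule accRD_mono[of K]) (use cnn rRnn in auto)
lemma b_le_r: "1 \<le> l \<Longrightarrow> l \<le> n \<Longrightarrow> n \<le> K \<Longrightarrow> b l \<le> r l n"
  using rmono[of l l n] by simp

lemma S_tx_iff: "S_tx K rS c k \<longleftrightarrow> 1 \<le> k \<and> k \<le> K \<and> a (k-1) < 1 \<and> b (k-1) < 1"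
proof
  assume h: "S_tx K rS c k"
  show "1 \<le> k \<and> k \<le> K \<and> a (k-1) < 1 \<and> b (k-1) < 1"
  proof (cases "k = 1")
    case True then show ?thesis using h by (simp add: S_tx_def)
  next
    case False
    then have "k - 1 \<in> {1..<k}" using h by (auto simp: S_tx_def)
    then show ?thesis using h unfolding S_tx_def by blast
  qed
next
  assume h: "1 \<le> k \<and> k \<le> K \<and> a (k-1) < 1 \<and> b (k-1) < 1"
  { fix m assume "m \<in> {1..<k}"
    then have "a m \<le> a (k-1)" "b m \<le> b (k-1)" using h amono bmono by auto
    then have "a m < 1 \<and> b m < 1" using h by linarith }
  then show "S_tx K rS c k" using h by (auto simp: S_tx_def)
qed

lemma relay_start_iff: "relay_start K rS c l \<longleftrightarrow> 1 \<le> l \<and> l < K \<and> a (l-1) < 1 \<and> 1 \<le> a l \<and> b l < 1"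
  unfolding relay_start_def S_tx_iff
  using bmono[of "l-1" l] by auto

lemma R_tx_next: "R_tx K rS rR c l (Suc l) \<longleftrightarrow> relay_start K rS c l"
  unfolding R_tx_def relay_start_def by auto

lemma R_tx_far:
  assumes "Suc (Suc l) \<le> k"
  shows "R_tx K rS rR c l k \<longleftrightarrow> 1 \<le> l \<and> k \<le> K \<and> a (l-1) < 1 \<and> 1 \<le> a l \<and> r l (k-1) < 1"
proof
  assume h: "R_tx K rS rR c l k"
  then have "k - 1 \<in> {l<..<k}" using assms by auto
  then show "1 \<le> l \<and> k \<le> K \<and> a (l-1) < 1 \<and> 1 \<le> a l \<and> r l (k-1) < 1"
    using h unfolding R_tx_def relay_start_iff by blast
next
  assume h: "1 \<le> l \<and> k \<le> K \<and> a (l-1) < 1 \<and> 1 \<le> a l \<and> r l (k-1) < 1"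
  have "b l \<le> r l (k-1)" using b_le_r[of l "k-1"] h assms by auto
  then have "b l < 1" using h by linarith
  moreover
  { fix m assume "m \<in> {l<..<k}"
    then have "r l m \<le> r l (k-1)" using h rmono[of l m "k-1"] by auto
    then have "r l m < 1" using h by linarith }
  ultimately show "R_tx K rS rR c l k" using h assms
    unfolding R_tx_def relay_start_iff by auto
qed

lemma not_success_iff:
  assumes K1: "1 \<le> K"
  shows "\<not> success K rS rR c \<longleftrightarrow> (a (K-1) < 1 \<and> b K < 1) \<or>
     (\<exists>i\<in>{1..K-1}. a (i-1) < 1 \<and> 1 \<le> a i \<and> r i K < 1)"
proof
  assume ns: "\<not> success K rS rR c"
  then have nS: "\<And>k. S_tx K rS c k \<Longrightarrow> b k < 1" and nR: "\<And>l k. R_tx K rS rR c l k \<Longrightarrow> r l k < 1"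
    unfolding success_def by force+
  have bfirst: "b j < 1" if j: "j \<le> K" "\<forall>m. 1 \<le> m \<and> m < j \<longrightarrow> a m < 1" for j
  proof (rule ccontr)
    assume "\<not> b j < 1"
    then obtain k where k: "k \<le> j" "1 \<le> b k" "\<forall>i<k. \<not> 1 \<le> b i"
      using least_ex[of "\<lambda>k. 1 \<le> b k" j] by auto
    have k1: "1 \<le> k" using k by (cases k) auto
    have "a (k-1) < 1"
    proof (cases "k - 1 = 0")
      case False then show ?thesis using j(2) k k1 by (metis diff_less le_less_trans less_numeral_extra(1) less_one not_le)
    qed simp
    moreover have "b (k-1) < 1" using k(3) k1 by (metis diff_less less_numeral_extra(1) less_le_trans not_le)
    ultimately have "S_tx K rS c k" using k1 k j by (simp add: S_tx_iff)
    then show False using nS k by force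
  qed
  show "(a (K-1) < 1 \<and> b K < 1) \<or> (\<exists>i\<in>{1..K-1}. a (i-1) < 1 \<and> 1 \<le> a i \<and> r i K < 1)"
  proof (cases "\<exists>m. 1 \<le> m \<and> m \<le> K - 1 \<and> 1 \<le> a m")
    case False
    have "a (K-1) < 1" using False by (cases "K - 1 = 0") auto
    moreover have "\<forall>m. 1 \<le> m \<and> m < K \<longrightarrow> a m < 1"
    proof (intro allI impI)
      fix m assume "1 \<le> m \<and> m < K"
      then have "1 \<le> m \<and> m \<le> K - 1" by auto
      then show "a m < 1" using False by (meson not_le)
    qed
    then have "b K < 1"
      by (intro bfirst) auto
    ultimately show ?thesis by blast
  next
    case True
    then obtain m where m: "1 \<le> m \<and> m \<le> K - 1 \<and> 1 \<le> a m" by blast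
    then obtain i where i: "i \<le> m" "1 \<le> i \<and> i \<le> K - 1 \<and> 1 \<le> a i"
      "\<forall>j<i. \<not> (1 \<le> j \<and> j \<le> K - 1 \<and> 1 \<le> a j)"
      using least_ex[of "\<lambda>m. 1 \<le> m \<and> m \<le> K - 1 \<and> 1 \<le> a m" m] by blast
    have ai: "a (i-1) < 1"
    proof (cases "i - 1 = 0")
      case False
      then have "i - 1 < i" "1 \<le> i - 1 \<and> i - 1 \<le> K - 1" using i by auto
      then show ?thesis using i(3) by (meson not_le)
    qed simp
    have bi: "b i < 1"
      by (rule bfirst) (use i in auto)
    have iK: "i < K" using i(2) by linarith
    have rs: "relay_start K rS c i" using i ai bi iK by (simp add: relay_start_iff)
    have "r i K < 1"
    proof (rule ccontr)
      assume "\<not> r i K < 1"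
      then obtain k where k: "k \<le> K" "i \<le> k \<and> 1 \<le> r i k" "\<forall>j<k. \<not> (i \<le> j \<and> 1 \<le> r i j)"
        using least_ex[of "\<lambda>k. i \<le> k \<and> 1 \<le> r i k" K] iK by fastforce
      have "k \<noteq> i" using k bi by auto
      then have "R_tx K rS rR c i k"
        unfolding R_tx_def using rs k by (auto simp: not_le)
      then show False using nR k by force
    qed
    then show ?thesis using i ai by auto
  qed
next
  assume h: "(a (K-1) < 1 \<and> b K < 1) \<or> (\<exists>i\<in>{1..K-1}. a (i-1) < 1 \<and> 1 \<le> a i \<and> r i K < 1)"
  show "\<not> success K rS rR c"
  proof (cases "a (K-1) < 1 \<and> b K < 1")
    case A: True
    { fix k assume "S_tx K rS c k"
      then have "k \<le> K" by (simp add: S_tx_iff)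
      then have "b k < 1" using bmono[of k K] A by auto }
    moreover
    { fix l k assume "R_tx K rS rR c l k"
      then have "relay_start K rS c l" by (simp add: R_tx_def)
      then have "l \<le> K - 1" "1 \<le> a l" by (auto simp: relay_start_iff)
      then have False using amono[of l "K-1"] A by auto }
    ultimately show ?thesis unfolding success_def by force
  next
    case False
    then obtain i where i: "i \<in> {1..K-1}" "a (i-1) < 1" "1 \<le> a i" "r i K < 1" using h by blast
    { fix k assume S: "S_tx K rS c k"
      then have k: "1 \<le> k" "k \<le> K" "a (k-1) < 1" by (auto simp: S_tx_iff)
      have "k \<le> i"
      proof (rule ccontr)
        assume "\<not> k \<le> i"
        then have "a i \<le> a (k-1)" using amono[of i "k-1"] k by auto
        then show False using i k by auto
      qed
      then have "b k \<le> b i" using bmono i by auto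
      also have "\<dots> \<le> r i K" using b_le_r[of i K] i by auto
      finally have "b k < 1" using i by auto }
    moreover
    { fix l k assume R: "R_tx K rS rR c l k"
      then have rs: "relay_start K rS c l" and lk: "l < k" "k \<le> K" by (auto simp: R_tx_def)
      then have l: "1 \<le> l" "l < K" "a (l-1) < 1" "1 \<le> a l" by (auto simp: relay_start_iff)
      have "l = i"
      proof (rule ccontr)
        assume "l \<noteq> i"
        then consider "l < i" | "i < l" by linarith
        then show False
        proof cases
          case 1 then have "a l \<le> a (i-1)" using amono[of l "i-1"] i by auto
          then show False using i l by auto
        next
          case 2 then have "a i \<le> a (l-1)" using amono[of i "l-1"] l by auto
          then show False using i l by auto
        qed
      qed
      then have "r l k \<le> r i K" using rmono[of i k K] l lk by auto
      then have "r l k < 1" using i by auto }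
    ultimately show ?thesis unfolding success_def by force
  qed
qed

end


lemma cap_nonneg: "0 \<le> x \<Longrightarrow> 0 \<le> cap x"
  by (simp add: cap_def)

lemma cap_meas[measurable]: "cap \<in> borel_measurable borel"
  unfolding cap_def by measurable

definition phiA :: "(nat \<Rightarrow> real) \<Rightarrow> nat \<Rightarrow> (link \<times> nat \<Rightarrow> real) \<Rightarrow> real" where "phiA rS m x = (\<Sum>i=1..m. cap (x (SR, i)) * rS i)"
definition phiR :: "(nat \<Rightarrow> real) \<Rightarrow> (nat \<Rightarrow> nat \<Rightarrow> real) \<Rightarrow> nat \<Rightarrow> nat \<Rightarrow> (link \<times> nat \<Rightarrow> real) \<Rightarrow> real" where "phiR rS rR l n y = (\<Sum>i=1..l. cap (y (SD, i)) * rS i) + (\<Sum>i=l+1..n. cap (y (RD, i)) * rR l i)"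

lemma comp_meas: "(a,i) \<in> S \<times> {1..K} \<Longrightarrow> (\<lambda>x. cap (x (a,i))) \<in> borel_measurable (PiM (S \<times> {1..K}) (\<lambda>_. borel))"
  by (rule measurable_compose[OF _ cap_meas]) (rule measurable_component_singleton)

lemma phiA_meas: "m \<le> K \<Longrightarrow> SR \<in> S \<Longrightarrow> phiA rS m \<in> borel_measurable (PiM (S \<times> {1..K}) (\<lambda>_. borel))"
  unfolding phiA_def
  by (intro borel_measurable_sum borel_measurable_times comp_meas borel_measurable_const) auto

lemma phiR_meas: "n \<le> K \<Longrightarrow> l \<le> n \<Longrightarrow> SD \<in> S \<Longrightarrow> RD \<in> S \<Longrightarrow> phiR rS rR l n \<in> borel_measurable (PiM (S \<times> {1..K}) (\<lambda>_. borel))"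
  unfolding phiR_def
  by (intro borel_measurable_add borel_measurable_sum borel_measurable_times comp_meas borel_measurable_const) auto

context prob_space begin

context
  fixes g :: "link \<Rightarrow> nat \<Rightarrow> 'a \<Rightarrow> real" and K :: nat and rS :: "nat \<Rightarrow> real" and rR :: "nat \<Rightarrow> nat \<Rightarrow> real"
  assumes IND: "indep_vars (\<lambda>_. borel) (\<lambda>(a, k). g a k) (UNIV \<times> {1..K})"
begin

private abbreviation "AA \<equiv> {SR} \<times> {1..K}"
private abbreviation "BB \<equiv> {SD, RD} \<times> {1..K}"
private definition "U w = restrict (\<lambda>i. (\<lambda>(a, k). g a k) i w) AA"
private definition "V w = restrict (\<lambda>i. (\<lambda>(a, k). g a k) i w) BB"

lemma g_meas: "k \<in> {1..K} \<Longrightarrow> g a k \<in> borel_measurable M"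
  using IND unfolding indep_vars_def by force

lemma accS_meas: "m \<le> K \<Longrightarrow> (\<lambda>w. accS rS (caps g w a) m) \<in> borel_measurable M"
  unfolding accS_def caps_def
  by (intro borel_measurable_sum borel_measurable_times measurable_compose[OF _ cap_meas] g_meas) auto

lemma accRD_meas: "n \<le> K \<Longrightarrow> l \<le> n \<Longrightarrow> (\<lambda>w. accRD rS rR (caps g w) l n) \<in> borel_measurable M"
  unfolding accRD_def
  by (intro borel_measurable_add accS_meas borel_measurable_sum borel_measurable_times)
     (auto simp: caps_def intro!: measurable_compose[OF _ cap_meas] g_meas)

private lemma indUV: "indep_var (PiM AA (\<lambda>_. borel)) U (PiM BB (\<lambda>_. borel)) V"
  unfolding U_def V_def
  by (rule indep_var_restrict[OF IND]) auto

private lemma aU: "m \<le> K \<Longrightarrow> accS rS (caps g w SR) m = phiA rS m (U w)"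
  unfolding accS_def phiA_def caps_def U_def by (intro sum.cong) auto

private lemma rV: "n \<le> K \<Longrightarrow> l \<le> n \<Longrightarrow> accRD rS rR (caps g w) l n = phiR rS rR l n (V w)"
  unfolding accRD_def accS_def phiR_def caps_def V_def by (intro arg_cong2[where f="(+)"] sum.cong) auto

lemma key_indep:
  assumes "m1 \<le> K" "m2 \<le> K" "l \<le> n" "n \<le> K"
  shows "prob {w\<in>space M. (accS rS (caps g w SR) m1 < 1 \<and> t \<le> accS rS (caps g w SR) m2) \<and> accRD rS rR (caps g w) l n < 1}
     = prob {w\<in>space M. accS rS (caps g w SR) m1 < 1 \<and> t \<le> accS rS (caps g w SR) m2}
       * prob {w\<in>space M. accRD rS rR (caps g w) l n < 1}"
proof -
  let ?P = "\<lambda>x. phiA rS m1 x < 1 \<and> t \<le> phiA rS m2 x"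
  let ?Q = "\<lambda>y. phiR rS rR l n y < 1"
  let ?X = "{x\<in>space (PiM AA (\<lambda>_. borel)). ?P x}"
  let ?Y = "{y\<in>space (PiM BB (\<lambda>_. borel)). ?Q y}"
  have X: "?X \<in> sets (PiM AA (\<lambda>_. borel))"
    using phiA_meas[of m1 K "{SR}" rS] phiA_meas[of m2 K "{SR}" rS] assms by measurable
  have Y: "?Y \<in> sets (PiM BB (\<lambda>_. borel))"
    using phiR_meas[of n K l "{SD,RD}" rS rR] assms by measurable
  have Um: "U \<in> measurable M (PiM AA (\<lambda>_. borel))" and Vm: "V \<in> measurable M (PiM BB (\<lambda>_. borel))"
    using indUV indep_var_rv1 indep_var_rv2 by blast+
  have "prob ((\<lambda>x. (U x, V x)) -` (?X \<times> ?Y) \<inter> space M) = prob (U -` ?X \<inter> space M) * prob (V -` ?Y \<inter> space M)"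
    by (rule indep_varD[OF indUV X Y])
  moreover have "(\<lambda>x. (U x, V x)) -` (?X \<times> ?Y) \<inter> space M = {w\<in>space M. (accS rS (caps g w SR) m1 < 1 \<and> t \<le> accS rS (caps g w SR) m2) \<and> accRD rS rR (caps g w) l n < 1}"
    using Um Vm assms by (auto simp: aU rV measurable_space)
  moreover have "U -` ?X \<inter> space M = {w\<in>space M. accS rS (caps g w SR) m1 < 1 \<and> t \<le> accS rS (caps g w SR) m2}"
    using Um assms by (auto simp: aU measurable_space)
  moreover have "V -` ?Y \<inter> space M = {w\<in>space M. accRD rS rR (caps g w) l n < 1}"
    using Vm assms by (auto simp: rV measurable_space)
  ultimately show ?thesis by simp
qed

end
end


context prob_space begin

context
  fixes g :: "link \<Rightarrow> nat \<Rightarrow> 'a \<Rightarrow> real" and K :: nat and rS :: "nat \<Rightarrow> real" and rR :: "nat \<Rightarrow> nat \<Rightarrow> real"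
  assumes IND: "indep_vars (\<lambda>_. borel) (\<lambda>(a, k). g a k) (UNIV \<times> {1..K})"
    and gnn: "\<forall>a. \<forall>k\<in>{1..K}. \<forall>w\<in>space M. 0 \<le> g a k w"
    and K1: "K \<ge> 1"
    and rSnn: "\<forall>k\<in>{1..K}. 0 \<le> rS k"
    and rRnn: "\<forall>l k. 1 \<le> l \<and> l < k \<and> k \<le> K \<longrightarrow> 0 \<le> rR l k"
begin

lemma cn: "w \<in> space M \<Longrightarrow> \<forall>a. \<forall>k\<in>{1..K}. 0 \<le> caps g w a k"
  using gnn by (simp add: caps_def cap_nonneg)




lemma ev_lt: "m \<le> K \<Longrightarrow> {w\<in>space M. accS rS (caps g w a) m < (t::real)} \<in> events"
  using accS_meas[OF IND, of m rS a] by measurable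
lemma ev_ge: "m \<le> K \<Longrightarrow> {w\<in>space M. (t::real) \<le> accS rS (caps g w a) m} \<in> events"
  using accS_meas[OF IND, of m rS a] by measurable
lemma ev_r: "n \<le> K \<Longrightarrow> l \<le> n \<Longrightarrow> {w\<in>space M. accRD rS rR (caps g w) l n < 1} \<in> events"
  using accRD_meas[OF IND, of n l rS rR] by measurable

lemma amono': "w \<in> space M \<Longrightarrow> m \<le> n \<Longrightarrow> n \<le> K \<Longrightarrow> accS rS (caps g w SR) m \<le> accS rS (caps g w SR) n"
  using amono[OF cn rSnn rRnn] by blast

lemma diffprob:
  assumes "1 \<le> i" "i \<le> K"
  shows "prob {w\<in>space M. accS rS (caps g w SR) (i-1) < 1 \<and> 1 \<le> accS rS (caps g w SR) i}
       = pSR M g rS (i-1) - pSR M g rS i"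
proof -
  have "{w\<in>space M. accS rS (caps g w SR) (i-1) < 1 \<and> 1 \<le> accS rS (caps g w SR) i}
     = {w\<in>space M. accS rS (caps g w SR) (i-1) < 1} - {w\<in>space M. accS rS (caps g w SR) i < 1}"
    by auto
  moreover have "{w\<in>space M. accS rS (caps g w SR) i < 1} \<subseteq> {w\<in>space M. accS rS (caps g w SR) (i-1) < 1}"
    using amono'[of _ "i-1" i] assms by fastforce
  ultimately show ?thesis unfolding pSR_def
    using assms by (simp add: finite_measure_Diff ev_lt)
qed

abbreviation "aa w m \<equiv> accS rS (caps g w SR) m"
abbreviation "bb w m \<equiv> accS rS (caps g w SD) m"
abbreviation "rr w l n \<equiv> accRD rS rR (caps g w) l n"

lemma ns_iff: "w \<in> space M \<Longrightarrow> \<not> success K rS rR (caps g w) \<longleftrightarrow> (aa w (K-1) < 1 \<and> bb w K < 1) \<or>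
     (\<exists>i\<in>{1..K-1}. aa w (i-1) < 1 \<and> 1 \<le> aa w i \<and> rr w i K < 1)"
  by (rule not_success_iff[OF cn rSnn rRnn K1])

lemma Pout_formula:
  "P_out M g K rS rR = pSD M g rS K * pSR M g rS (K - 1)
           + (\<Sum>i=1..K-1. (pSR M g rS (i - 1) - pSR M g rS i) * pSRD M g rS rR i K)"
proof -
  define EA where "EA = {w\<in>space M. aa w (K-1) < 1 \<and> bb w K < 1}"
  define EB where "EB i = {w\<in>space M. (aa w (i-1) < 1 \<and> 1 \<le> aa w i) \<and> rr w i K < 1}" for i
  have NS: "{w\<in>space M. \<not> success K rS rR (caps g w)} = EA \<union> (\<Union>i\<in>{1..K-1}. EB i)"
    unfolding EA_def EB_def using ns_iff by auto
  have evA: "EA \<in> events" unfolding EA_def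
    using ev_lt[where m="K-1" and a=SR and t=1] ev_lt[where m=K and a=SD and t=1] by (simp add: Collect_conj_eq[symmetric] sets.Int)
  have evB: "EB i \<in> events" if "i \<in> {1..K-1}" for i
  proof -
    have "EB i = ({w\<in>space M. aa w (i-1) < 1} \<inter> {w\<in>space M. 1 \<le> aa w i}) \<inter> {w\<in>space M. rr w i K < 1}"
      unfolding EB_def by auto
    then show ?thesis using that ev_lt[where m="i-1" and a=SR and t=1] ev_ge[where m=i and a=SR and t=1] ev_r[of K i] by auto
  qed
  have disjB: "disjoint_family_on EB {1..K-1}"
    unfolding disjoint_family_on_def
  proof (intro ballI impI)
    fix i j assume ij: "i \<in> {1..K-1}" "j \<in> {1..K-1}" "i \<noteq> j"
    { fix i j assume ij: "i \<in> {1..K-1}" "j \<in> {1..K-1}" "i < j"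
      have "EB i \<inter> EB j = {}"
      proof (safe)
        fix w assume "w \<in> EB i" "w \<in> EB j"
        then have "w \<in> space M" "1 \<le> aa w i" "aa w (j-1) < 1" unfolding EB_def by auto
        moreover have "aa w i \<le> aa w (j-1)" using amono'[of w i "j-1"] ij \<open>w \<in> space M\<close> by auto
        ultimately show "w \<in> {}" by auto
      qed }
    then show "EB i \<inter> EB j = {}" using ij by (metis inf_commute linorder_neqE_nat)
  qed
  have disjAB: "EA \<inter> (\<Union>i\<in>{1..K-1}. EB i) = {}"
  proof safe
    fix w i assume "w \<in> EA" "i \<in> {1..K-1}" "w \<in> EB i"
    then have "w \<in> space M" "1 \<le> aa w i" "aa w (K-1) < 1" unfolding EA_def EB_def by auto
    moreover have "aa w i \<le> aa w (K-1)" using amono'[of w i "K-1"] \<open>i \<in> {1..K-1}\<close> \<open>w \<in> space M\<close> by auto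
    ultimately show "w \<in> {}" by auto
  qed
  have pA: "prob EA = pSD M g rS K * pSR M g rS (K - 1)"
  proof -
    have "prob EA = prob {w\<in>space M. (aa w (K-1) < 1 \<and> 0 \<le> aa w 0) \<and> rr w K K < 1}"
      unfolding EA_def by simp
    also have "\<dots> = prob {w\<in>space M. aa w (K-1) < 1 \<and> 0 \<le> aa w 0} * prob {w\<in>space M. rr w K K < 1}"
      by (rule key_indep[OF IND]) auto
    also have "\<dots> = pSD M g rS K * pSR M g rS (K - 1)"
      by (simp add: pSD_def pSR_def)
    finally show ?thesis .
  qed
  have pB: "prob (EB i) = (pSR M g rS (i - 1) - pSR M g rS i) * pSRD M g rS rR i K" if "i \<in> {1..K-1}" for i
  proof -
    have "prob (EB i) = prob {w\<in>space M. aa w (i-1) < 1 \<and> 1 \<le> aa w i} * prob {w\<in>space M. rr w i K < 1}"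
      unfolding EB_def by (rule key_indep[OF IND]) (use that in auto)
    moreover have "i \<le> K" "1 \<le> i" using that by auto
    ultimately show ?thesis using diffprob[of i] by (simp add: pSRD_def)
  qed
  have "P_out M g K rS rR = prob (EA \<union> (\<Union>i\<in>{1..K-1}. EB i))"
    unfolding P_out_def NS ..
  also have "\<dots> = prob EA + prob (\<Union>i\<in>{1..K-1}. EB i)"
    by (rule finite_measure_Union[OF evA _ disjAB]) (use evB in auto)
  also have "prob (\<Union>i\<in>{1..K-1}. EB i) = (\<Sum>i\<in>{1..K-1}. prob (EB i))"
    by (rule finite_measure_finite_Union[OF _ _ disjB]) (use evB in auto)
  finally show ?thesis using pA pB by simp
qed

lemma int_if:
  assumes "{w\<in>space M. P w} \<in> events"
  shows "integrable M (\<lambda>w. if P w then (c::real) else 0) \<and>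
         integral\<^sup>L M (\<lambda>w. if P w then c else 0) = c * prob {w\<in>space M. P w}"
proof -
  let ?E = "{w\<in>space M. P w}"
  have eq: "\<And>w. w \<in> space M \<Longrightarrow> (if P w then c else 0) = c * indicator ?E w"
    by (auto simp: indicator_def)
  have "integrable M (\<lambda>w. c * indicator ?E w)"
    using assms emeasure_finite by (intro integrable_mult_right integrable_real_indicator) (auto simp: less_top[symmetric])
  then have i: "integrable M (\<lambda>w. if P w then c else 0)"
    by (subst Bochner_Integration.integrable_cong[where g="\<lambda>w. c * indicator ?E w", OF refl]) (use eq in auto)
  have "integral\<^sup>L M (\<lambda>w. if P w then c else 0) = integral\<^sup>L M (\<lambda>w. c * indicator ?E w)"
    by (rule Bochner_Integration.integral_cong) (use eq in auto)
  also have "\<dots> = c * prob ?E"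
    by (simp add: Int_absorb2)
  finally show ?thesis using i by simp
qed

lemma S_iff: "w \<in> space M \<Longrightarrow> S_tx K rS (caps g w) k \<longleftrightarrow> 1 \<le> k \<and> k \<le> K \<and> aa w (k-1) < 1 \<and> bb w (k-1) < 1"
  by (rule S_tx_iff[OF cn rSnn rRnn])

lemma rs_iff: "w \<in> space M \<Longrightarrow> relay_start K rS (caps g w) l \<longleftrightarrow> 1 \<le> l \<and> l < K \<and> aa w (l-1) < 1 \<and> 1 \<le> aa w l \<and> bb w l < 1"
  by (rule relay_start_iff[OF cn rSnn rRnn])

lemma Rnext_iff: "w \<in> space M \<Longrightarrow> R_tx K rS rR (caps g w) l (Suc l) \<longleftrightarrow> relay_start K rS (caps g w) l"
  by (rule R_tx_next[OF cn rSnn rRnn])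

lemma Rfar_iff: "w \<in> space M \<Longrightarrow> Suc (Suc l) \<le> k \<Longrightarrow> R_tx K rS rR (caps g w) l k \<longleftrightarrow> 1 \<le> l \<and> k \<le> K \<and> aa w (l-1) < 1 \<and> 1 \<le> aa w l \<and> rr w l (k-1) < 1"
  by (rule R_tx_far[OF cn rSnn rRnn])

lemma S_ev_prob:
  "{w\<in>space M. S_tx K rS (caps g w) k} \<in> events \<and>
   prob {w\<in>space M. S_tx K rS (caps g w) k} = (if 1 \<le> k \<and> k \<le> K then pSD M g rS (k-1) * pSR M g rS (k-1) else 0)"
proof (cases "1 \<le> k \<and> k \<le> K")
  case True
  have eq: "{w\<in>space M. S_tx K rS (caps g w) k} = {w\<in>space M. (aa w (k-1) < 1 \<and> 0 \<le> aa w 0) \<and> rr w (k-1) (k-1) < 1}"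
    using True S_iff by auto
  have "{w\<in>space M. (aa w (k-1) < 1 \<and> 0 \<le> aa w 0) \<and> rr w (k-1) (k-1) < 1} =
     {w\<in>space M. aa w (k-1) < 1} \<inter> {w\<in>space M. bb w (k-1) < 1}" by auto
  then have ev: "{w\<in>space M. S_tx K rS (caps g w) k} \<in> events"
    unfolding eq using True ev_lt[where m="k-1" and a=SR and t=1] ev_lt[where m="k-1" and a=SD and t=1] by auto
  have "prob {w\<in>space M. S_tx K rS (caps g w) k} = prob {w\<in>space M. aa w (k-1) < 1 \<and> 0 \<le> aa w 0} * prob {w\<in>space M. rr w (k-1) (k-1) < 1}"
    unfolding eq by (rule key_indep[OF IND]) (use True in auto)
  then show ?thesis using True ev by (simp add: pSD_def pSR_def)
next
  case False
  then have E: "{w\<in>space M. S_tx K rS (caps g w) k} = {}" using S_iff by auto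
  show ?thesis unfolding E using False by auto
qed

definition "FR l k = (if k = Suc l \<and> 1 \<le> l \<and> l < K then (pSR M g rS (l - 1) - pSR M g rS l) * pSD M g rS l
   else if Suc (Suc l) \<le> k \<and> 1 \<le> l \<and> k \<le> K then (pSR M g rS (l - 1) - pSR M g rS l) * pSRD M g rS rR l (k-1) else 0)"

lemma R_ev_prob:
  "{w\<in>space M. R_tx K rS rR (caps g w) l k} \<in> events \<and>
   prob {w\<in>space M. R_tx K rS rR (caps g w) l k} = FR l k"
proof -
  consider "k = Suc l" | "Suc (Suc l) \<le> k" | "k \<le> l" by linarith
  then show ?thesis
  proof cases
    case 1
    show ?thesis
    proof (cases "1 \<le> l \<and> l < K")
      case True
      have eq: "{w\<in>space M. R_tx K rS rR (caps g w) l k} = {w\<in>space M. (aa w (l-1) < 1 \<and> 1 \<le> aa w l) \<and> rr w l l < 1}"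
        using True rs_iff 1 Rnext_iff by auto
      have "{w\<in>space M. (aa w (l-1) < 1 \<and> 1 \<le> aa w l) \<and> rr w l l < 1} =
         ({w\<in>space M. aa w (l-1) < 1} \<inter> {w\<in>space M. 1 \<le> aa w l}) \<inter> {w\<in>space M. bb w l < 1}" by auto
      then have ev: "{w\<in>space M. R_tx K rS rR (caps g w) l k} \<in> events"
        unfolding eq using True ev_lt[where m="l-1" and a=SR and t=1] ev_ge[where m="l" and a=SR and t=1]
          ev_lt[where m="l" and a=SD and t=1] by auto
      have "prob {w\<in>space M. R_tx K rS rR (caps g w) l k} = prob {w\<in>space M. aa w (l-1) < 1 \<and> 1 \<le> aa w l} * prob {w\<in>space M. rr w l l < 1}"
        unfolding eq by (rule key_indep[OF IND]) (use True in auto)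
      then show ?thesis using True ev 1 diffprob[of l] by (simp add: pSD_def FR_def)
    next
      case False
      then have E: "{w\<in>space M. R_tx K rS rR (caps g w) l k} = {}" using rs_iff 1 Rnext_iff by auto
      show ?thesis unfolding E using False 1 by (auto simp: FR_def)
    qed
  next
    case 2
    show ?thesis
    proof (cases "1 \<le> l \<and> k \<le> K")
      case True
      have eq: "{w\<in>space M. R_tx K rS rR (caps g w) l k} = {w\<in>space M. (aa w (l-1) < 1 \<and> 1 \<le> aa w l) \<and> rr w l (k-1) < 1}"
        using True Rfar_iff 2 by auto
      have "{w\<in>space M. (aa w (l-1) < 1 \<and> 1 \<le> aa w l) \<and> rr w l (k-1) < 1} =
         ({w\<in>space M. aa w (l-1) < 1} \<inter> {w\<in>space M. 1 \<le> aa w l}) \<inter> {w\<in>space M. rr w l (k-1) < 1}" by auto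
      then have ev: "{w\<in>space M. R_tx K rS rR (caps g w) l k} \<in> events"
        unfolding eq using True 2 ev_lt[where m="l-1" and a=SR and t=1] ev_ge[where m="l" and a=SR and t=1]
          ev_r[of "k-1" l] by auto
      have "prob {w\<in>space M. R_tx K rS rR (caps g w) l k} = prob {w\<in>space M. aa w (l-1) < 1 \<and> 1 \<le> aa w l} * prob {w\<in>space M. rr w l (k-1) < 1}"
        unfolding eq by (rule key_indep[OF IND]) (use True 2 in auto)
      then show ?thesis using True ev 2 diffprob[of l] by (simp add: pSRD_def FR_def)
    next
      case False
      then have E: "{w\<in>space M. R_tx K rS rR (caps g w) l k} = {}" using Rfar_iff 2 by auto
      show ?thesis unfolding E using False 2 by (auto simp: FR_def)
    qed
  next
    case 3
    then have E: "{w\<in>space M. R_tx K rS rR (caps g w) l k} = {}" by (auto simp: R_tx_def)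
    show ?thesis unfolding E using 3 by (auto simp: FR_def)
  qed
qed

lemma sumR:
  "(\<Sum>l=1..K. \<Sum>k=1..K. rR l k * FR l k) =
   (\<Sum>i=1..K-1. (pSR M g rS (i - 1) - pSR M g rS i) *
           ((\<Sum>l=i+2..K. rR i l * pSRD M g rS rR i (l - 1)) + rR i (i + 1) * pSD M g rS i))"
proof -
  have row0: "(\<Sum>k=1..K. rR K k * FR K k) = 0"
    by (rule sum.neutral) (auto simp: FR_def)
  have split: "{1..K} = insert K {1..K-1}" using K1 by auto
  have row: "(\<Sum>k=1..K. rR i k * FR i k) = (pSR M g rS (i - 1) - pSR M g rS i) *
           ((\<Sum>l=i+2..K. rR i l * pSRD M g rS rR i (l - 1)) + rR i (i + 1) * pSD M g rS i)"
    if i: "i \<in> {1..K-1}" for i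
  proof -
    have "(\<Sum>k=1..K. rR i k * FR i k) = (\<Sum>k=Suc i..K. rR i k * FR i k)"
      by (rule sum.mono_neutral_right) (use i in \<open>auto simp: FR_def\<close>)
    also have "\<dots> = rR i (Suc i) * FR i (Suc i) + (\<Sum>k=Suc (Suc i)..K. rR i k * FR i k)"
      by (rule sum.atLeast_Suc_atMost) (use i in auto)
    also have "(\<Sum>k=Suc (Suc i)..K. rR i k * FR i k) =
        (\<Sum>k=i+2..K. (pSR M g rS (i - 1) - pSR M g rS i) * (rR i k * pSRD M g rS rR i (k - 1)))"
      by (rule sum.cong) (use i in \<open>auto simp: FR_def\<close>)
    also have "FR i (Suc i) = (pSR M g rS (i - 1) - pSR M g rS i) * pSD M g rS i"
      using i by (auto simp: FR_def)
    finally show ?thesis by (simp add: sum_distrib_left algebra_simps)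
  qed
  have "(\<Sum>l=1..K. \<Sum>k=1..K. rR l k * FR l k) = (\<Sum>l=1..K-1. \<Sum>k=1..K. rR l k * FR l k)"
    using row0 arg_cong[where f="sum (\<lambda>l. \<Sum>k=1..K. rR l k * FR l k)", OF split] sum.insert[of "{1..K-1}" K "\<lambda>l. \<Sum>k=1..K. rR l k * FR l k"] K1 by simp
  also have "\<dots> = (\<Sum>i=1..K-1. (pSR M g rS (i - 1) - pSR M g rS i) *
           ((\<Sum>l=i+2..K. rR i l * pSRD M g rS rR i (l - 1)) + rR i (i + 1) * pSD M g rS i))"
    by (rule sum.cong[OF refl row])
  finally show ?thesis .
qed

lemma Ns_formula:
  "N_s_bar M g Nb K rS rR = real Nb * ((\<Sum>i=1..K. rS i * pSD M g rS (i - 1) * pSR M g rS (i - 1))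
      + (\<Sum>i=1..K-1. (pSR M g rS (i - 1) - pSR M g rS i) *
           ((\<Sum>l=i+2..K. rR i l * pSRD M g rS rR i (l - 1)) + rR i (i + 1) * pSD M g rS i)))"
proof -
  define fS where "fS k w = (if S_tx K rS (caps g w) k then rS k else 0)" for k w
  define fR where "fR l k w = (if R_tx K rS rR (caps g w) l k then rR l k else 0)" for l k w
  have iS: "integrable M (fS k)" "integral\<^sup>L M (fS k) = rS k * (if 1 \<le> k \<and> k \<le> K then pSD M g rS (k-1) * pSR M g rS (k-1) else 0)" for k
    unfolding fS_def using int_if[OF conjunct1[OF S_ev_prob], of k "rS k"] S_ev_prob[of k] by auto
  have iR: "integrable M (fR l k)" "integral\<^sup>L M (fR l k) = rR l k * FR l k" for l k
    unfolding fR_def using int_if[OF conjunct1[OF R_ev_prob], of l k "rR l k"] R_ev_prob[of l k] by auto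
  have cu: "(\<lambda>w. chan_uses Nb K rS rR (caps g w)) = (\<lambda>w. real Nb * ((\<Sum>k=1..K. fS k w) + (\<Sum>l=1..K. \<Sum>k=1..K. fR l k w)))"
    by (simp add: chan_uses_def fS_def fR_def)
  have "N_s_bar M g Nb K rS rR = real Nb * (integral\<^sup>L M (\<lambda>w. \<Sum>k=1..K. fS k w) + integral\<^sup>L M (\<lambda>w. \<Sum>l=1..K. \<Sum>k=1..K. fR l k w))"
    unfolding N_s_bar_def cu
    by (subst integral_mult_right_zero, subst Bochner_Integration.integral_add)
       (auto intro!: integrable_sum iS iR)
  also have "integral\<^sup>L M (\<lambda>w. \<Sum>k=1..K. fS k w) = (\<Sum>k=1..K. integral\<^sup>L M (fS k))"
    by (rule Bochner_Integration.integral_sum) (use iS in auto)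
  also have "integral\<^sup>L M (\<lambda>w. \<Sum>l=1..K. \<Sum>k=1..K. fR l k w) = (\<Sum>l=1..K. \<Sum>k=1..K. integral\<^sup>L M (fR l k))"
    by (subst Bochner_Integration.integral_sum, fastforce intro!: integrable_sum iR, subst Bochner_Integration.integral_sum) (auto intro: iR)
  finally show ?thesis using sumR by (simp add: iS iR mult.assoc)
qed

end
end


theorem proposition1:
  fixes M :: "'a measure" and g :: "link \<Rightarrow> nat \<Rightarrow> 'a \<Rightarrow> real"
    and Nb K :: nat and rS :: "nat \<Rightarrow> real" and rR :: "nat \<Rightarrow> nat \<Rightarrow> real"
  assumes "prob_space M"
    and "prob_space.indep_vars M (\<lambda>_. borel) (\<lambda>(a, k). g a k) (UNIV \<times> {1..K})"
    and "\<forall>a. \<forall>k\<in>{1..K}. distr M borel (g a k) = distr M borel (g a 1)"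
    and "\<forall>a. \<forall>k\<in>{1..K}. \<forall>x. measure M {w\<in>space M. g a k w = x} = 0"
    and "\<forall>a. \<forall>k\<in>{1..K}. \<forall>w\<in>space M. 0 \<le> g a k w"
    and "K \<ge> 1" and "Nb > 0"
    and "\<forall>k\<in>{1..K}. 0 \<le> rS k"
    and "\<forall>l k. 1 \<le> l \<and> l < k \<and> k \<le> K \<longrightarrow> 0 \<le> rR l k"
  defines "D \<equiv> (\<Sum>i=1..K. rS i * pSD M g rS (i - 1) * pSR M g rS (i - 1))
      + (\<Sum>i=1..K-1. (pSR M g rS (i - 1) - pSR M g rS i) *
           ((\<Sum>l=i+2..K. rR i l * pSRD M g rS rR i (l - 1)) + rR i (i + 1) * pSD M g rS i))"
  shows "P_out M g K rS rR = pSD M g rS K * pSR M g rS (K - 1)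
           + (\<Sum>i=1..K-1. (pSR M g rS (i - 1) - pSR M g rS i) * pSRD M g rS rR i K)
       \<and> N_s_bar M g Nb K rS rR = real Nb * D
       \<and> throughput M g Nb K rS rR = (1 - P_out M g K rS rR) / D"
proof -
  interpret prob_space M by fact
  have P: "P_out M g K rS rR = pSD M g rS K * pSR M g rS (K - 1)
           + (\<Sum>i=1..K-1. (pSR M g rS (i - 1) - pSR M g rS i) * pSRD M g rS rR i K)"
    by (rule Pout_formula[OF assms(2) assms(5) assms(6) assms(8) assms(9)])
  have N: "N_s_bar M g Nb K rS rR = real Nb * D"
    unfolding D_def by (rule Ns_formula[OF assms(2) assms(5) assms(6) assms(8) assms(9)])
  have T: "throughput M g Nb K rS rR = (1 - P_out M g K rS rR) / D"
    unfolding throughput_def N using assms(7) by simp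
  show ?thesis using P N T by blast
qed

end
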